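(* Let $f$ be as in the standing setting and suppose $f$ is quasi-strongly convex on $X$ with constant $\kappa_f>0$, i.e. $$f^*\ \ge\ f(x)+\langle \nabla f(x),\bar x-x\rangle+\tfrac{\kappa_f}{2}\|x-\bar x\|^2\qquad\forall x\in X .$$ Then $f$ has a quadratic under-approximation on $X$ with the same constant, i.e. $$f(x)\ \ge\ f^*+\langle \nabla f(\bar x),x-\bar x\rangle+\tfrac{\kappa_f}{2}\|x-\bar x\|^2\qquad\forall x\in X .$$
   Context: Standing setting: $X\subseteq\mathbb{R}^n$ is a nonempty closed convex set; $f:X\to\mathbb{R}$ is convex and continuously differentiable, with $L_f$-Lipschitz continuous gradient on $X$ ($\|\nabla f(x)-\nabla f(y)\|\le L_f\|x-y\|$ for all $x,y\in X$, $L_f>0$). Consider the problem $f^*=\min_{x\in X}f(x)$, whose optimal set $X^*=\arg\min_{x\in X}f(x)$ is assumed nonempty and closed and $f^*$ finite. $\|\cdot\|$ is the Euclidean norm, $[u]_S$ denotes the Euclidean projection of $u$ onto a closed convex set $S$, and for $x\in X$ we write $\bar x=[x]_{X^*}$. *)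

theory Defs
  imports "HOL-Analysis.Analysis"
begin

end

theory Submission
  imports Defs
begin

lemma nsq: "(norm (a - b))\<^sup>2 = (norm a)\<^sup>2 - 2 * (a \<bullet> b) + (norm (b::'a::real_inner))\<^sup>2"
  by (simp add: power2_norm_eq_inner inner_diff_left inner_diff_right inner_commute)

theorem theorem1:
  fixes X :: "(real ^ 'n) set" and f :: "real ^ 'n \<Rightarrow> real"
    and gradf :: "real ^ 'n \<Rightarrow> real ^ 'n" and L\<^sub>f \<kappa>\<^sub>f fstar :: real
  assumes X_ne: "X \<noteq> {}" and X_closed: "closed X" and X_convex: "convex X"
    and f_convex: "convex_on X f"
    and f_grad: "\<And>x. x \<in> X \<Longrightarrow> (f has_derivative (\<lambda>h. gradf x \<bullet> h)) (at x within X)"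
    and grad_cont: "continuous_on X gradf"
    and L_pos: "L\<^sub>f > 0"
    and grad_lip: "\<And>x y. x \<in> X \<Longrightarrow> y \<in> X \<Longrightarrow> norm (gradf x - gradf y) \<le> L\<^sub>f * norm (x - y)"
    and fstar_def: "fstar = (INF x\<in>X. f x)"
    and fstar_bdd: "bdd_below (f ` X)"
    and Xstar_ne: "{x\<in>X. f x = fstar} \<noteq> {}"
    and Xstar_closed: "closed {x\<in>X. f x = fstar}"
    and kappa_pos: "\<kappa>\<^sub>f > 0"
    and qsc: "\<And>x. x \<in> X \<Longrightarrow>
      (let xb = closest_point {y\<in>X. f y = fstar} x in
        fstar \<ge> f x + gradf x \<bullet> (xb - x) + \<kappa>\<^sub>f / 2 * (norm (x - xb))\<^sup>2)"
  shows "\<forall>x\<in>X. (let xb = closest_point {y\<in>X. f y = fstar} x in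
        f x \<ge> fstar + gradf xb \<bullet> (x - xb) + \<kappa>\<^sub>f / 2 * (norm (x - xb))\<^sup>2)"
proof
  fix x assume xX: "x \<in> X"
  define S where "S = {y\<in>X. f y = fstar}"
  define xb where "xb = closest_point S x"
  define v where "v = x - xb"
  define c where "c = \<kappa>\<^sub>f / 2 * (norm v)\<^sup>2"
  define xt where "xt = (\<lambda>t::real. xb + t *\<^sub>R v)"
  define \<phi> where "\<phi> = (\<lambda>t. f (xt t) - fstar)"
  define D where "D = (\<lambda>t. gradf (xt t) \<bullet> v)"
  define \<psi> where "\<psi> = (\<lambda>t. \<phi> t / t - c * t)"
  have lowf: "fstar \<le> f y" if "y \<in> X" for y
    unfolding fstar_def using that fstar_bdd by (simp add: cINF_lower)
  have Sconv: "convex S"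
  proof (rule convexI)
    fix y z :: "real^'n" and u w :: real
    assume h0: "y \<in> S" "z \<in> S" "0 \<le> u" "0 \<le> w" "u + w = 1"
    then have h: "y \<in> X" "z \<in> X" "0 \<le> u" "0 \<le> w" "u + w = 1" "f y = fstar" "f z = fstar"
      unfolding S_def by auto
    have m: "u *\<^sub>R y + w *\<^sub>R z \<in> X" using X_convex h unfolding convex_def by blast
    then have "fstar \<le> f (u *\<^sub>R y + w *\<^sub>R z)" by (rule lowf)
    moreover have "f (u *\<^sub>R y + w *\<^sub>R z) \<le> u * f y + w * f z"
      using f_convex h unfolding convex_on_def by blast
    moreover have "u * f y + w * f z = fstar" using h by (metis distrib_left mult.commute mult_1_right)
    ultimately show "u *\<^sub>R y + w *\<^sub>R z \<in> S" using h m unfolding S_def by simp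
  qed
  have Scl: "closed S" using Xstar_closed S_def by simp
  have Sne: "S \<noteq> {}" using Xstar_ne S_def by simp
  have xbS: "xb \<in> S" unfolding xb_def using closest_point_in_set[OF Scl Sne] .
  have xbX: "xb \<in> X" and fxb: "f xb = fstar" using xbS S_def by auto
  have dotle: "v \<bullet> (z - xb) \<le> 0" if "z \<in> S" for z
    unfolding v_def xb_def using closest_point_dot[OF Sconv Scl that] .
  have xtX: "xt t \<in> X" if "0 \<le> t" "t \<le> 1" for t
  proof -
    have "xt t = (1 - t) *\<^sub>R xb + t *\<^sub>R x" unfolding xt_def v_def by (simp add: algebra_simps)
    then show ?thesis using X_convex xbX xX that unfolding convex_def by auto
  qed
  have cp: "closest_point S (xt t) = xb" if "0 \<le> t" for t
  proof -
    have "dist (xt t) xb \<le> dist (xt t) z" if zS: "z \<in> S" for z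
    proof -
      have "(dist (xt t) xb)\<^sup>2 = t\<^sup>2 * (norm v)\<^sup>2"
        unfolding xt_def dist_norm by (simp add: power_mult_distrib)
      also have "\<dots> \<le> (dist (xt t) z)\<^sup>2"
      proof -
        have "(dist (xt t) z)\<^sup>2 = (norm (t *\<^sub>R v - (z - xb)))\<^sup>2"
          unfolding xt_def dist_norm by (simp add: algebra_simps)
        also have "\<dots> = t\<^sup>2 * (norm v)\<^sup>2 - 2 * t * (v \<bullet> (z - xb)) + (norm (z - xb))\<^sup>2"
          by (simp add: nsq power_mult_distrib)
        finally show ?thesis using dotle[OF zS] \<open>0 \<le> t\<close>
          by (smt (verit) mult_nonneg_nonpos zero_le_power2)
      qed
      finally show ?thesis by (simp add: power2_le_iff_abs_le)
    qed
    then show ?thesis using closest_point_unique[OF Sconv Scl xbS] by metis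
  qed
  have key: "\<phi> t + c * t\<^sup>2 \<le> t * D t" if "0 \<le> t" "t \<le> 1" for t
  proof -
    have q: "fstar \<ge> f (xt t) + gradf (xt t) \<bullet> (xb - xt t) + \<kappa>\<^sub>f / 2 * (norm (xt t - xb))\<^sup>2"
      using qsc[OF xtX[OF that]] cp[OF that(1)] unfolding S_def by (simp add: Let_def)
    have e1: "gradf (xt t) \<bullet> (xb - xt t) = - (t * D t)"
      unfolding xt_def D_def by (simp add: inner_diff_right)
    have e2: "norm (xt t - xb) = t * norm v"
      unfolding xt_def using that by auto
    have "\<phi> t + c * t\<^sup>2 = f (xt t) - fstar + \<kappa>\<^sub>f / 2 * (norm (xt t - xb))\<^sup>2"
      unfolding \<phi>_def c_def e2 by (simp add: power_mult_distrib)
    then show ?thesis using q e1 by linarith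
  qed
  have dphi: "(\<phi> has_real_derivative D t) (at t within {0..1})" if "t \<in> {0..1}" for t
  proof -
    have img: "xt ` {0..1} \<subseteq> X" using xtX by auto
    have lin: "(xt has_derivative (\<lambda>y. y *\<^sub>R v)) (at t within {0..1})"
      unfolding xt_def by (auto intro!: derivative_eq_intros)
    have "((\<lambda>s. f (xt s)) has_derivative (\<lambda>y. gradf (xt t) \<bullet> (y *\<^sub>R v))) (at t within {0..1})"
      by (rule has_derivative_in_compose2[OF f_grad img that lin])
    then have "((\<lambda>s. f (xt s) - fstar) has_derivative (\<lambda>y. gradf (xt t) \<bullet> (y *\<^sub>R v))) (at t within {0..1})"
      by (auto intro!: derivative_eq_intros)
    moreover have "(\<lambda>y. gradf (xt t) \<bullet> (y *\<^sub>R v)) = (*) (D t)"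
      unfolding D_def by (auto simp: mult.commute)
    ultimately show ?thesis unfolding has_field_derivative_def \<phi>_def by simp
  qed
  have phicont: "continuous_on {0..1} \<phi>"
    using dphi by (meson DERIV_continuous continuous_on_eq_continuous_within)
  have mono: "\<psi> s \<le> \<psi> 1" if "0 < s" "s \<le> 1" for s
  proof (rule DERIV_nonneg_imp_increasing_open[OF that(2)])
    fix t assume t: "s < t" "t < 1"
    have "(\<phi> has_real_derivative D t) (at t)"
      using dphi[of t] t that at_within_Icc_at[of 0 t 1] by auto
    then have "((\<lambda>x. \<phi> x / x) has_real_derivative (D t * t - \<phi> t * 1) / (t * t)) (at t)"
      using t that by (intro DERIV_divide[OF _ DERIV_ident]) auto
    then have "(\<psi> has_real_derivative ((D t * t - \<phi> t * 1) / (t * t) - c * 1)) (at t)"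
      unfolding \<psi>_def by (intro DERIV_diff DERIV_cmult DERIV_ident)
    moreover have "(D t * t - \<phi> t * 1) / (t * t) - c * 1 \<ge> 0"
    proof -
      have "c * (t * t) \<le> D t * t - \<phi> t" using key[of t] t that by (simp add: power2_eq_square algebra_simps)
      then show ?thesis using t that by (simp add: field_simps)
    qed
    ultimately show "\<exists>y. (\<psi> has_real_derivative y) (at t) \<and> 0 \<le> y" by blast
  next
    show "continuous_on {s..1} \<psi>"
      unfolding \<psi>_def using that
      by (auto intro!: continuous_intros continuous_on_subset[OF phicont])
  qed
  have F: "at (0::real) within {0..1} \<noteq> bot"
    by (simp add: at_within_Icc_at_right)
  have lim: "((\<lambda>s. (\<phi> s - \<phi> 0) / (s - 0)) \<longlongrightarrow> D 0) (at 0 within {0..1})"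
    using dphi[of 0] by (simp add: has_field_derivative_iff)
  have phi0: "\<phi> 0 = 0" unfolding \<phi>_def xt_def using fxb by simp
  have lim2: "((\<lambda>s. \<phi> s / s - c * s) \<longlongrightarrow> D 0 - c * 0) (at 0 within {0..1})"
  proof -
    have "((\<lambda>s. \<phi> s / s) \<longlongrightarrow> D 0) (at 0 within {0..1})" using lim phi0 by simp
    moreover have "((\<lambda>s::real. c * s) \<longlongrightarrow> c * 0) (at 0 within {0..1})"
      by (intro tendsto_intros)
    ultimately show ?thesis by (rule tendsto_diff)
  qed
  have ev: "\<forall>\<^sub>F s in at 0 within {0..1}. \<phi> s / s - c * s \<le> \<psi> 1"
    unfolding eventually_at_filter using mono unfolding \<psi>_def
    by (auto intro!: always_eventually)
  have "D 0 \<le> \<psi> 1"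
    using tendsto_le[OF F tendsto_const lim2 ev] by simp
  then have "gradf xb \<bullet> v \<le> f x - fstar - c"
    unfolding D_def \<psi>_def \<phi>_def xt_def v_def by simp
  then show "let xb = closest_point {y\<in>X. f y = fstar} x in
        f x \<ge> fstar + gradf xb \<bullet> (x - xb) + \<kappa>\<^sub>f / 2 * (norm (x - xb))\<^sup>2"
    unfolding Let_def using xb_def S_def v_def c_def by simp
qed

end
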